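(* For each integer $m\ge1$, let $H_m$ be the configuration whose underlying graph is the path $a - b - c - d$ (edges $ab$, $bc$, $cd$), with wakeup tags $t_b=t_c=0$, $t_a=m$, $t_d=m+1$. Then each configuration $H_m$ is feasible, and every dedicated leader election algorithm for $H_m$ takes time at least $m$.
   Context: Model. A configuration is a finite simple undirected connected graph $G$ in which each node $v$ is tagged with a non-negative integer $t_v$ (wakeup tag). Nodes are anonymous and communicate in synchronous global rounds. A node $v$ wakes up in the first global round $r\le t_v$ in which it receives a message, if any, and otherwise in global round $t_v$; its local clock is $0$ in its wakeup round, it acts from local round $1$, and nodes do not know the global clock. In each round a node transmits a message to all neighbours, listens, or terminates. A listening node receives $M$ if exactly one neighbour transmits ($M$), hears collision noise (distinct from silence and messages) if at least two neighbours transmit, and silence otherwise; a transmitting node hears nothing. A DRIP is a common function mapping a node's history (what it heard in each local round $0,\ldots,i-1$, including whether/by which message it was woken) to its action in local round $i\ge1$, with every node eventually terminating permanently; a decision function maps each node's final history to $\{0,1\}$; a dedicated leader election algorithm for $G$ is a DRIP plus decision function such that exactly one node of $G$ outputs $1$; $G$ is feasible if one exists. The time of such an algorithm is the number of rounds until the nodes terminate. *)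

theory Defs
  imports Main
begin

(* Heard M: exactly one neighbour transmitted M;
   Noise: at least two neighbours transmitted; Silence: none; Nothing: the node
   itself transmitted (a transmitting node hears nothing). *)
datatype 'm fb = Silence | Noise | Heard 'm | Nothing

datatype 'm act = Transmit 'm | Listen | Terminate

(* A history of length i
   lists what the node heard in local rounds 0..i-1 (entry 0 records how it was
   woken: Heard M = woken by message M, otherwise spontaneous wakeup);
   alg h is the action in local round (length h) >= 1. *)
type_synonym 'm drip = "'m fb list \<Rightarrow> 'm act"

definition dead :: "'m drip \<Rightarrow> 'm fb list \<Rightarrow> bool" where
  "dead alg h \<longleftrightarrow> (\<exists>i. 1 \<le> i \<and> i < length h \<and> alg (take i h) = Terminate)"

(* message transmitted by v in the current global round, given the histories H
   (None = asleep) at the start of the round *)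
definition txm :: "'m drip \<Rightarrow> ('v \<Rightarrow> 'm fb list option) \<Rightarrow> 'v \<Rightarrow> 'm option" where
  "txm alg H v = (case H v of None \<Rightarrow> None
      | Some h \<Rightarrow> (if dead alg h then None
                   else (case alg h of Transmit M \<Rightarrow> Some M | _ \<Rightarrow> None)))"

definition feedback :: "'m drip \<Rightarrow> ('v \<Rightarrow> 'v \<Rightarrow> bool) \<Rightarrow> ('v \<Rightarrow> 'm fb list option) \<Rightarrow> 'v \<Rightarrow> 'm fb" where
  "feedback alg E H v =
     (if txm alg H v \<noteq> None then Nothing
      else (let T = {u. E v u \<and> txm alg H u \<noteq> None} in
            if T = {} then Silence
            else if card T = 1 then Heard (the (txm alg H (THE u. u \<in> T)))
            else Noise))"

definition step :: "'m drip \<Rightarrow> ('v \<Rightarrow> 'v \<Rightarrow> bool) \<Rightarrow> ('v \<Rightarrow> nat) \<Rightarrow> nat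
                     \<Rightarrow> ('v \<Rightarrow> 'm fb list option) \<Rightarrow> ('v \<Rightarrow> 'm fb list option)" where
  "step alg E t r H = (\<lambda>v. case H v of
       Some h \<Rightarrow> Some (h @ [feedback alg E H v])
     | None \<Rightarrow> (case feedback alg E H v of
                  Heard M \<Rightarrow> Some [Heard M]
                | _ \<Rightarrow> (if r = t v then Some [feedback alg E H v] else None)))"

(* hist alg E t r v: history of v after global rounds 0..r-1 (None if still asleep) *)
fun hist :: "'m drip \<Rightarrow> ('v \<Rightarrow> 'v \<Rightarrow> bool) \<Rightarrow> ('v \<Rightarrow> nat) \<Rightarrow> nat \<Rightarrow> 'v \<Rightarrow> 'm fb list option" where
  "hist alg E t 0 = (\<lambda>_. None)"
| "hist alg E t (Suc r) = step alg E t r (hist alg E t r)"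

(* v terminates (for the first time) in global round r, with final history h *)
definition terminates_at :: "'m drip \<Rightarrow> ('v \<Rightarrow> 'v \<Rightarrow> bool) \<Rightarrow> ('v \<Rightarrow> nat) \<Rightarrow> 'v \<Rightarrow> nat \<Rightarrow> 'm fb list \<Rightarrow> bool" where
  "terminates_at alg E t v r h \<longleftrightarrow>
     hist alg E t r v = Some h \<and> alg h = Terminate \<and> \<not> dead alg h"

(* dedicated leader election algorithm (DRIP alg + decision function dec,
   output 1 = True) for the configuration with node set UNIV :: 'v set *)
definition dedicated_LE :: "'m drip \<Rightarrow> ('m fb list \<Rightarrow> bool) \<Rightarrow> ('v \<Rightarrow> 'v \<Rightarrow> bool) \<Rightarrow> ('v \<Rightarrow> nat) \<Rightarrow> bool" where
  "dedicated_LE alg dec E t \<longleftrightarrow>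
     (\<forall>v. \<exists>r h. terminates_at alg E t v r h) \<and>
     (\<exists>!v. \<exists>r h. terminates_at alg E t v r h \<and> dec h)"

definition run_time :: "'m drip \<Rightarrow> ('v \<Rightarrow> 'v \<Rightarrow> bool) \<Rightarrow> ('v \<Rightarrow> nat) \<Rightarrow> nat" where
  "run_time alg E t = Max {r. \<exists>v h. terminates_at alg E t v r h}"

definition feasible :: "('v \<Rightarrow> 'v \<Rightarrow> bool) \<Rightarrow> ('v \<Rightarrow> nat) \<Rightarrow> bool" where
  "feasible E t \<longleftrightarrow> (\<exists>(alg :: nat drip) dec. dedicated_LE alg dec E t)"

datatype node = A | B | C | D

definition pathE :: "node \<Rightarrow> node \<Rightarrow> bool" where
  "pathE x y \<longleftrightarrow> (x = A \<and> y = B) \<or> (x = B \<and> y = A) \<or> (x = B \<and> y = C) \<or> (x = C \<and> y = B)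
                 \<or> (x = C \<and> y = D) \<or> (x = D \<and> y = C)"

definition Htag :: "nat \<Rightarrow> node \<Rightarrow> nat" where
  "Htag m v = (case v of A \<Rightarrow> m | B \<Rightarrow> 0 | C \<Rightarrow> 0 | D \<Rightarrow> m + 1)"

end

theory Submission
  imports Defs
begin

lemma fbA: "feedback alg pathE H A = (if txm alg H A \<noteq> None then Nothing
   else if txm alg H B = None then Silence else Heard (the (txm alg H B)))"
proof -
  have "{u. pathE A u \<and> txm alg H u \<noteq> None} = (if txm alg H B \<noteq> None then {B} else {})"
    by (auto simp: pathE_def)
  then show ?thesis by (simp add: feedback_def)
qed

lemma fbD: "feedback alg pathE H D = (if txm alg H D \<noteq> None then Nothing
   else if txm alg H C = None then Silence else Heard (the (txm alg H C)))"
proof -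
  have "{u. pathE D u \<and> txm alg H u \<noteq> None} = (if txm alg H C \<noteq> None then {C} else {})"
    by (auto simp: pathE_def)
  then show ?thesis by (simp add: feedback_def)
qed

definition fb2 :: "'m option \<Rightarrow> 'm option \<Rightarrow> 'm fb" where
  "fb2 x y = (case (x, y) of (None, None) \<Rightarrow> Silence | (Some a, None) \<Rightarrow> Heard a
      | (None, Some b) \<Rightarrow> Heard b | (Some _, Some _) \<Rightarrow> Noise)"

lemma fbB: "feedback alg pathE H B = (if txm alg H B \<noteq> None then Nothing
   else fb2 (txm alg H A) (txm alg H C))"
proof -
  have "{u. pathE B u \<and> txm alg H u \<noteq> None} = (if txm alg H A \<noteq> None then {A} else {})
     \<union> (if txm alg H C \<noteq> None then {C} else {})"
    by (auto simp: pathE_def)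
  then show ?thesis
    by (cases "txm alg H A"; cases "txm alg H C"; simp add: feedback_def fb2_def)
qed

lemma fbC: "feedback alg pathE H C = (if txm alg H C \<noteq> None then Nothing
   else fb2 (txm alg H D) (txm alg H B))"
proof -
  have "{u. pathE C u \<and> txm alg H u \<noteq> None} = (if txm alg H D \<noteq> None then {D} else {})
     \<union> (if txm alg H B \<noteq> None then {B} else {})"
    by (auto simp: pathE_def)
  then show ?thesis
    by (cases "txm alg H D"; cases "txm alg H B"; simp add: feedback_def fb2_def)
qed

lemma fb2_sym: "fb2 x y = fb2 y x"
  by (cases x; cases y; simp add: fb2_def)

lemma hist_nonempty: "hist alg E t r v = Some h \<Longrightarrow> h \<noteq> []"
proof (induction r arbitrary: h)
  case 0 then show ?case by simp
next
  case (Suc r)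
  then show ?case
    by (auto simp: step_def split: option.splits fb.splits if_splits)
qed

lemma hist_prefix: "hist alg E t r v = Some h \<Longrightarrow>
   \<exists>xs. hist alg E t (r + k) v = Some (h @ xs) \<and> length xs = k"
proof (induction k)
  case 0 then show ?case by simp
next
  case (Suc k)
  then obtain xs where "hist alg E t (r + k) v = Some (h @ xs)" "length xs = k" by blast
  then show ?case by (auto simp: step_def)
qed

lemma term_unique:
  assumes "terminates_at alg E t v r h" "terminates_at alg E t v r' h'"
  shows "r = r' \<and> h = h'"
proof -
  have key: False if "terminates_at alg E t v r h" "terminates_at alg E t v r' h'" "r < r'"
    for r r' h h'
  proof -
    from that have hr: "hist alg E t r v = Some h" and th: "alg h = Terminate"
      and hr': "hist alg E t r' v = Some h'" and nd: "\<not> dead alg h'"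
      by (auto simp: terminates_at_def)
    obtain xs where "hist alg E t (r + (r' - r)) v = Some (h @ xs)" "length xs = r' - r"
      using hist_prefix[OF hr] by blast
    with hr' that(3) have h': "h' = h @ xs" "xs \<noteq> []" by auto
    have "h \<noteq> []" using hist_nonempty[OF hr] .
    then have "dead alg h'" unfolding dead_def using h' th
      by (intro exI[of _ "length h"]) (auto simp: Suc_le_eq)
    with nd show False by simp
  qed
  have "r = r'"
    using key[OF assms] key[OF assms(2,1)] by (cases "r < r'"; cases "r' < r") auto
  with assms show ?thesis by (simp add: terminates_at_def)
qed


fun sw :: "node \<Rightarrow> node" where
  "sw A = D" | "sw B = C" | "sw C = B" | "sw D = A"

lemma txm_sym: "(\<And>u. H (sw u) = H u) \<Longrightarrow> txm alg H (sw v) = txm alg H v"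
  by (simp add: txm_def)

lemma fb_sym: assumes "\<And>u. H (sw u) = H u"
  shows "feedback alg pathE H (sw v) = feedback alg pathE H v"
proof -
  have t: "\<And>u. txm alg H (sw u) = txm alg H u" using txm_sym assms by blast
  show ?thesis
    using t[of A] t[of B] t[of C] t[of D]
    by (cases v) (simp_all add: fbA fbB fbC fbD fb2_sym)
qed

lemma hist_sym: "r \<le> m \<Longrightarrow> hist alg pathE (Htag m) r (sw v) = hist alg pathE (Htag m) r v"
proof (induction r arbitrary: v)
  case 0 then show ?case by simp
next
  case (Suc r)
  then have IH: "\<And>u. hist alg pathE (Htag m) r (sw u) = hist alg pathE (Htag m) r u" by simp
  have f: "feedback alg pathE (hist alg pathE (Htag m) r) (sw v) = feedback alg pathE (hist alg pathE (Htag m) r) v"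
    by (rule fb_sym) (rule IH)
  have tg: "(r = Htag m (sw v)) = (r = Htag m v)" using Suc.prems
    by (cases v) (auto simp: Htag_def)
  show ?case unfolding hist.simps step_def IH[of v] f tg ..
qed

lemma sw_neq: "sw v \<noteq> v" by (cases v) auto

lemma lower_bound:
  assumes le: "dedicated_LE alg dec pathE (Htag m)"
  shows "m \<le> run_time alg pathE (Htag m)"
proof -
  let ?S = "{r. \<exists>v h. terminates_at alg pathE (Htag m) v r h}"
  from le obtain v r h where vt: "terminates_at alg pathE (Htag m) v r h" "dec h"
    and uq: "\<And>w r' h'. terminates_at alg pathE (Htag m) w r' h' \<Longrightarrow> dec h' \<Longrightarrow> w = v"
  proof -
    from le have "\<exists>!v. \<exists>r h. terminates_at alg pathE (Htag m) v r h \<and> dec h"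
      unfolding dedicated_LE_def by blast
    then obtain v where v1: "\<exists>r h. terminates_at alg pathE (Htag m) v r h \<and> dec h"
      and v2: "\<And>w. (\<exists>r h. terminates_at alg pathE (Htag m) w r h \<and> dec h) \<Longrightarrow> w = v"
      by (elim ex1E) blast
    from v1 v2 show thesis using that by blast
  qed
  have "m \<le> r"
  proof (rule ccontr)
    assume "\<not> m \<le> r"
    then have "hist alg pathE (Htag m) r (sw v) = hist alg pathE (Htag m) r v"
      by (intro hist_sym) simp
    with vt have "terminates_at alg pathE (Htag m) (sw v) r h"
      by (simp add: terminates_at_def)
    from uq[OF this vt(2)] sw_neq show False by simp
  qed
  define T where "T w = {r. \<exists>h. terminates_at alg pathE (Htag m) w r h}" for w
  have fT: "finite (T w)" for w
  proof (cases "T w = {}")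
    case False
    then obtain r0 where "r0 \<in> T w" by blast
    have "T w \<subseteq> {r0}"
    proof
      fix x assume "x \<in> T w"
      with \<open>r0 \<in> T w\<close> obtain h1 h2 where "terminates_at alg pathE (Htag m) w x h1"
        "terminates_at alg pathE (Htag m) w r0 h2" unfolding T_def by blast
      from term_unique[OF this] show "x \<in> {r0}" by simp
    qed
    then show ?thesis by (rule finite_subset) simp
  qed simp
  have "?S \<subseteq> T A \<union> T B \<union> T C \<union> T D"
  proof
    fix x assume "x \<in> ?S"
    then obtain w h where "terminates_at alg pathE (Htag m) w x h" by blast
    then show "x \<in> T A \<union> T B \<union> T C \<union> T D" unfolding T_def by (cases w) auto
  qed
  then have "finite ?S" by (rule finite_subset) (simp add: fT)
  moreover have "r \<in> ?S" using vt by blast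
  ultimately have "r \<le> Max ?S" by (rule Max_ge)
  with \<open>m \<le> r\<close> show ?thesis unfolding run_time_def by simp
qed


lemma Htag_simps[simp]: "Htag m A = m" "Htag m B = 0" "Htag m C = 0" "Htag m D = Suc m"
  by (simp_all add: Htag_def)

definition alg0 :: "nat \<Rightarrow> nat drip" where
  "alg0 m h = (if h = replicate (length h) Silence then
      (if length h \<le> m then Listen else if length h = Suc m then Transmit 0 else Terminate)
     else Terminate)"

definition dec0 :: "nat fb list \<Rightarrow> bool" where
  "dec0 h = (h = [Silence, Heard 0])"

lemma dead_rep: "r \<le> Suc (Suc m) \<Longrightarrow> \<not> dead (alg0 m) (replicate r Silence)"
  by (auto simp: dead_def alg0_def min_def)

lemma txm_rep: "r \<le> m \<Longrightarrow> txm (alg0 m) H v = None" if "H v = Some (replicate r Silence)"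
  using that dead_rep[of r m] by (simp add: txm_def alg0_def)

lemma txm_none: "H v = None \<Longrightarrow> txm alg H v = None"
  by (simp add: txm_def)

lemma hist_early: "1 \<le> r \<Longrightarrow> r \<le> m \<Longrightarrow>
  hist (alg0 m) pathE (Htag m) r v = (if v = B \<or> v = C then Some (replicate r Silence) else None)"
proof (induction r arbitrary: v rule: nat_induct_at_least)
  case base
  have t: "\<And>u. txm (alg0 m) (hist (alg0 m) pathE (Htag m) 0) u = None" by (simp add: txm_def)
  show ?case using base t
    by (cases v) (simp_all add: step_def fbA fbB fbC fbD fb2_def)
next
  case (Suc r)
  let ?H = "hist (alg0 m) pathE (Htag m) r"
  have IH: "\<And>u. ?H u = (if u = B \<or> u = C then Some (replicate r Silence) else None)"
    using Suc by simp
  have t: "txm (alg0 m) ?H u = None" for u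
    using Suc.prems IH[of u] by (cases "u = B \<or> u = C") (auto intro: txm_rep txm_none)
  show ?case unfolding hist.simps using Suc.prems t IH
    by (cases v) (simp_all add: step_def fbA fbB fbC fbD fb2_def replicate_append_same del: hist.simps)
qed


lemma hist_m1: assumes "1 \<le> m"
  shows "hist (alg0 m) pathE (Htag m) (Suc m) v =
    (if v = B \<or> v = C then Some (replicate (Suc m) Silence) else if v = A then Some [Silence] else None)"
proof -
  let ?H = "hist (alg0 m) pathE (Htag m) m"
  have IH: "\<And>u. ?H u = (if u = B \<or> u = C then Some (replicate m Silence) else None)"
    using hist_early[OF assms] by simp
  have t: "txm (alg0 m) ?H u = None" for u
    using IH[of u] by (cases "u = B \<or> u = C") (auto intro: txm_rep txm_none)
  show ?thesis unfolding hist.simps using t IH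
    by (cases v) (simp_all add: step_def fbA fbB fbC fbD fb2_def replicate_append_same del: hist.simps)
qed

lemma hist_m2: assumes "1 \<le> m"
  shows "hist (alg0 m) pathE (Htag m) (Suc (Suc m)) v =
    (if v = B \<or> v = C then Some (replicate (Suc m) Silence @ [Nothing])
     else if v = A then Some [Silence, Heard 0] else Some [Heard 0])"
proof -
  let ?H = "hist (alg0 m) pathE (Htag m) (Suc m)"
  have IH: "\<And>u. ?H u = (if u = B \<or> u = C then Some (replicate (Suc m) Silence) else if u = A then Some [Silence] else None)"
    using hist_m1[OF assms] by simp
  have tB: "txm (alg0 m) ?H u = Some 0" if "u = B \<or> u = C" for u
    using IH[of u] that dead_rep[of "Suc m" m] by (simp add: txm_def alg0_def)
  have tA: "txm (alg0 m) ?H A = None"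
    using IH[of A] assms by (simp add: txm_def alg0_def dead_def)
  have tD: "txm (alg0 m) ?H D = None"
    using IH[of D] by (simp add: txm_def)
  show ?thesis unfolding hist.simps(2)[of "alg0 m" pathE "Htag m" "Suc m"] using tA tD tB[of B] tB[of C] IH
    by (cases v) (simp_all add: step_def fbA fbB fbC fbD fb2_def del: hist.simps)
qed

lemma term_m2: assumes "1 \<le> m"
  shows "terminates_at (alg0 m) pathE (Htag m) v (Suc (Suc m)) (the (hist (alg0 m) pathE (Htag m) (Suc (Suc m)) v))"
proof -
  have a: "\<not> dead (alg0 m) (replicate (Suc m) Silence @ [Nothing])"
  proof
    assume "dead (alg0 m) (replicate (Suc m) Silence @ [Nothing])"
    then obtain i where i: "1 \<le> i" "i < Suc (Suc m)"
      "alg0 m (take i (replicate (Suc m) Silence @ [Nothing])) = Terminate"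
      unfolding dead_def by auto
    have eq: "take i (replicate (Suc m) Silence @ [Nothing]) = replicate i Silence"
      using i(2) by (simp only: take_append take_replicate length_replicate) (simp add: min_def del: replicate.simps)
    have "alg0 m (replicate i Silence) = Terminate" using i(3) unfolding eq .
    with i show False by (simp add: alg0_def split: if_splits)
  qed
  have b: "\<not> dead (alg0 m) [Silence, Heard 0]"
  proof
    assume "dead (alg0 m) [Silence, Heard 0]"
    then obtain i where "1 \<le> i" "i < 2" "alg0 m (take i [Silence, Heard 0]) = Terminate"
      unfolding dead_def by auto
    then have "alg0 m [Silence] = Terminate" by (cases i) auto
    with assms show False by (simp add: alg0_def)
  qed
  have c: "\<not> dead (alg0 m) [Heard 0]"
    by (auto simp: dead_def)
  show ?thesis using a b c unfolding terminates_at_def hist_m2[OF assms]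
    by (cases v) (simp_all add: alg0_def del: hist.simps)
qed

lemma feasible_H: assumes "1 \<le> m" shows "feasible pathE (Htag m)"
  unfolding feasible_def
proof (intro exI)
  show "dedicated_LE (alg0 m) dec0 pathE (Htag m)"
    unfolding dedicated_LE_def
  proof (intro conjI allI ex1I)
    fix v show "\<exists>r h. terminates_at (alg0 m) pathE (Htag m) v r h" using term_m2[OF assms] by blast
  next
    show "\<exists>r h. terminates_at (alg0 m) pathE (Htag m) A r h \<and> dec0 h"
      using term_m2[OF assms, of A] hist_m2[OF assms, of A] by (auto simp: dec0_def)
  next
    fix v assume "\<exists>r h. terminates_at (alg0 m) pathE (Htag m) v r h \<and> dec0 h"
    then obtain r h where "terminates_at (alg0 m) pathE (Htag m) v r h" "dec0 h" by blast
    with term_unique[OF this(1) term_m2[OF assms, of v]] hist_m2[OF assms, of v]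
    show "v = A" by (cases v) (auto simp: dec0_def)
  qed
qed

theorem lemma13:
  fixes m :: nat
  assumes "1 \<le> m"
  shows "feasible pathE (Htag m) \<and>
         (\<forall>(alg :: 'msg drip) (dec :: 'msg fb list \<Rightarrow> bool).
             dedicated_LE alg dec pathE (Htag m) \<longrightarrow> m \<le> run_time alg pathE (Htag m))"
  using feasible_H[OF assms] lower_bound by blast

end
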